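(* Let $\mathbb{M}$ and $\mathbb{M}'$ be partial groups and let $F\colon\mathbb{M}\times\Delta[m]\to\mathbb{M}'$ be a simplicial map. Then $F$ is completely determined by: (i) the maps $f_i=F|_{\mathbb{M}\times\{\bullet_i\}}\colon\mathbb{M}\to\mathbb{M}'$ for $i=0,\dots,m$; and (ii) the elements $[\eta_k]=F(v_{\mathbb{M}},\iota_k)\in\mathbb{M}'_1$ for $k=1,\dots,m$.
   Context: Partial groups are regarded as simplicial sets: the $n$-simplices of $\mathbb{M}$ are the words $[x_1|\dots|x_n]$ in the domain of the partial product, with $d_0$ deleting $x_1$, $d_n$ deleting $x_n$, $d_i$ ($0<i<n$) replacing $x_i,x_{i+1}$ by $x_ix_{i+1}$, and $s_i$ inserting $1$ in position $i+1$; $v_{\mathbb{M}}$ denotes the unique vertex of $\mathbb{M}$. $\Delta[m]$ is the nerve of the poset $\bullet_0\to\bullet_1\to\dots\to\bullet_m$; $\bullet_0,\dots,\bullet_m$ are its vertices and $\iota_k\colon\bullet_{k-1}\to\bullet_k$ ($k=1,\dots,m$) its non-degenerate edges between consecutive vertices. *)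

theory Defs
  imports Main
begin

text \<open>A partial group is given by a set M, a domain D of words (lists) over M,
a product Pi defined on D, and an inversion iv on M. The identity is Pi [].\<close>

definition partial_group ::
  "'a set \<Rightarrow> 'a list set \<Rightarrow> ('a list \<Rightarrow> 'a) \<Rightarrow> ('a \<Rightarrow> 'a) \<Rightarrow> bool" where
  "partial_group M D Pi iv \<longleftrightarrow>
     D \<subseteq> lists M \<and>
     [] \<in> D \<and>
     (\<forall>x\<in>M. [x] \<in> D) \<and>
     (\<forall>u v. u @ v \<in> D \<longrightarrow> u \<in> D \<and> v \<in> D) \<and>
     (\<forall>w\<in>D. Pi w \<in> M) \<and>
     (\<forall>x\<in>M. Pi [x] = x) \<and>
     (\<forall>u v w. u @ v @ w \<in> D \<longrightarrow>
        u @ [Pi v] @ w \<in> D \<and> Pi (u @ v @ w) = Pi (u @ [Pi v] @ w)) \<and>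
     (\<forall>x\<in>M. iv x \<in> M \<and> iv (iv x) = x) \<and>
     (\<forall>w\<in>D. rev (map iv w) @ w \<in> D \<and> Pi (rev (map iv w) @ w) = Pi [])"

text \<open>n-simplices of M: words of length n in D.\<close>

definition pg_face :: "('a list \<Rightarrow> 'a) \<Rightarrow> nat \<Rightarrow> 'a list \<Rightarrow> 'a list" where
  "pg_face Pi i w =
     (if i = 0 then tl w
      else if i = length w then butlast w
      else take (i - 1) w @ [Pi [w ! (i - 1), w ! i]] @ drop (Suc i) w)"

definition pg_degen :: "('a list \<Rightarrow> 'a) \<Rightarrow> nat \<Rightarrow> 'a list \<Rightarrow> 'a list" where
  "pg_degen Pi i w = take i w @ [Pi []] @ drop i w"

definition delta_simplices :: "nat \<Rightarrow> nat \<Rightarrow> nat list set" where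
  "delta_simplices m n = {a. length a = Suc n \<and> sorted a \<and> set a \<subseteq> {..m}}"

definition delta_face :: "nat \<Rightarrow> nat list \<Rightarrow> nat list" where
  "delta_face i a = take i a @ drop (Suc i) a"

definition delta_degen :: "nat \<Rightarrow> nat list \<Rightarrow> nat list" where
  "delta_degen i a = take (Suc i) a @ drop i a"

definition pg_prod_simplex ::
  "'a list set \<Rightarrow> nat \<Rightarrow> ('a list \<times> nat list) \<Rightarrow> bool" where
  "pg_prod_simplex D m x \<longleftrightarrow> fst x \<in> D \<and> snd x \<in> delta_simplices m (length (fst x))"

definition simplicial_map_prod ::
  "'a list set \<Rightarrow> ('a list \<Rightarrow> 'a) \<Rightarrow> nat \<Rightarrow> 'b list set \<Rightarrow> ('b list \<Rightarrow> 'b)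
     \<Rightarrow> ('a list \<times> nat list \<Rightarrow> 'b list) \<Rightarrow> bool" where
  "simplicial_map_prod D Pi m D' Pi' F \<longleftrightarrow>
     (\<forall>w a. pg_prod_simplex D m (w, a) \<longrightarrow>
        F (w, a) \<in> D' \<and> length (F (w, a)) = length w \<and>
        (0 < length w \<longrightarrow> (\<forall>i\<le>length w.
            F (pg_face Pi i w, delta_face i a) = pg_face Pi' i (F (w, a)))) \<and>
        (\<forall>i\<le>length w.
            F (pg_degen Pi i w, delta_degen i a) = pg_degen Pi' i (F (w, a))))"

end

theory Submission
  imports Defs
begin

lemma pgD:
  assumes "partial_group M D Pi iv"
  shows "D \<subseteq> lists M" "[] \<in> D" "\<And>x. x \<in> M \<Longrightarrow> [x] \<in> D"
    "\<And>u v. u @ v \<in> D \<Longrightarrow> u \<in> D" "\<And>u v. u @ v \<in> D \<Longrightarrow> v \<in> D"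
    "\<And>w. w \<in> D \<Longrightarrow> Pi w \<in> M" "\<And>x. x \<in> M \<Longrightarrow> Pi [x] = x"
    "\<And>u v w. u @ v @ w \<in> D \<Longrightarrow> u @ [Pi v] @ w \<in> D"
    "\<And>u v w. u @ v @ w \<in> D \<Longrightarrow> Pi (u @ v @ w) = Pi (u @ [Pi v] @ w)"
  using assms unfolding partial_group_def by blast+

lemma tlbl: "length u = length v \<Longrightarrow> 2 \<le> length u \<Longrightarrow> tl u = tl v \<Longrightarrow> butlast u = butlast v \<Longrightarrow> u = v"
  by (metis Suc_1 Suc_le_lessD list.size(3) nth_butlast zero_less_diff
      hd_conv_nth length_butlast length_greater_0_conv list.collapse)

lemma prod_tl:
  assumes pg: "partial_group M D Pi iv" and s: "pg_prod_simplex D m (w,a)" and n: "0 < length w"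
  shows "pg_prod_simplex D m (tl w, tl a)"
proof -
  have "[hd w] @ tl w \<in> D" using s n by (simp add: pg_prod_simplex_def)
  hence "tl w \<in> D" using pgD(5)[OF pg] by blast
  moreover have "set (tl a) \<subseteq> set a" by (cases a) auto
  ultimately show ?thesis using s n
    by (auto simp: pg_prod_simplex_def delta_simplices_def sorted_tl)
qed

lemma prod_bl:
  assumes pg: "partial_group M D Pi iv" and s: "pg_prod_simplex D m (w,a)" and n: "0 < length w"
  shows "pg_prod_simplex D m (butlast w, butlast a)"
proof -
  have "butlast w @ [last w] \<in> D" using s n by (simp add: pg_prod_simplex_def)
  hence "butlast w \<in> D" using pgD(4)[OF pg] by blast
  moreover have "set (butlast a) \<subseteq> set a" by (rule in_set_butlastD[THEN subsetI])
  ultimately show ?thesis using s n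
    by (auto simp: pg_prod_simplex_def delta_simplices_def sorted_butlast)
qed

lemma face_tl:
  assumes "simplicial_map_prod D Pi m D' Pi' F" "pg_prod_simplex D m (w,a)" "0 < length w"
  shows "F (tl w, tl a) = tl (F (w,a))"
proof -
  have "F (pg_face Pi 0 w, delta_face 0 a) = pg_face Pi' 0 (F (w, a))"
    using assms unfolding simplicial_map_prod_def by blast
  thus ?thesis by (simp add: pg_face_def delta_face_def drop_Suc)
qed

lemma face_bl:
  assumes "simplicial_map_prod D Pi m D' Pi' F" "pg_prod_simplex D m (w,a)" "0 < length w"
  shows "F (butlast w, butlast a) = butlast (F (w,a))"
proof -
  have A: "F (pg_face Pi (length w) w, delta_face (length w) a) = pg_face Pi' (length w) (F (w, a))"
    and L: "length (F (w,a)) = length w"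
    using assms unfolding simplicial_map_prod_def by blast+
  have la: "length a = Suc (length w)" using assms(2) by (simp add: pg_prod_simplex_def delta_simplices_def)
  have "delta_face (length w) a = butlast a" using la by (simp add: delta_face_def butlast_conv_take)
  thus ?thesis using A L assms(3) by (simp add: pg_face_def)
qed

lemma face_1:
  assumes "simplicial_map_prod D Pi m D' Pi' F" "pg_prod_simplex D m ([x,y],[b,c,d])"
  shows "F ([Pi [x,y]], [b,d]) = [Pi' [F ([x,y],[b,c,d]) ! 0, F ([x,y],[b,c,d]) ! 1]]"
proof -
  have A: "F (pg_face Pi 1 [x,y], delta_face 1 [b,c,d]) = pg_face Pi' 1 (F ([x,y],[b,c,d]))"
    and L: "length (F ([x,y],[b,c,d])) = 2"
    using assms unfolding simplicial_map_prod_def by auto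
  then obtain p q where "F ([x,y],[b,c,d]) = [p,q]"
    by (cases "F ([x,y],[b,c,d])" rule: list.exhaust; cases "tl (F ([x,y],[b,c,d]))"; auto)
  thus ?thesis using A by (simp add: pg_face_def delta_face_def)
qed

theorem proposition5p2:
  fixes M :: "'a set" and D :: "'a list set" and Pi :: "'a list \<Rightarrow> 'a" and iv :: "'a \<Rightarrow> 'a"
    and M' :: "'b set" and D' :: "'b list set" and Pi' :: "'b list \<Rightarrow> 'b" and iv' :: "'b \<Rightarrow> 'b"
    and m :: nat and F G :: "'a list \<times> nat list \<Rightarrow> 'b list"
  assumes "partial_group M D Pi iv"
    and "partial_group M' D' Pi' iv'"
    and "simplicial_map_prod D Pi m D' Pi' F"
    and "simplicial_map_prod D Pi m D' Pi' G"
    and "\<forall>i\<le>m. \<forall>w\<in>D. F (w, replicate (Suc (length w)) i) = G (w, replicate (Suc (length w)) i)"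
    and "\<forall>k\<in>{1..m}. F ([Pi []], [k - 1, k]) = G ([Pi []], [k - 1, k])"
  shows "\<forall>x. pg_prod_simplex D m x \<longrightarrow> F x = G x"
proof -
  note pg = assms(1)
  define e where "e = Pi []"
  have D0: "[] \<in> D" using pgD(2)[OF pg] .
  have eM: "e \<in> M" using pgD(6)[OF pg D0] unfolding e_def .
  have xe: "[x, e] \<in> D \<and> Pi [x, e] = x" if "[x] \<in> D" for x
  proof -
    have xM: "x \<in> M" using pgD(1)[OF pg] that by auto
    have "[x] @ [] @ [] \<in> D" using that by simp
    hence "[x] @ [Pi []] @ [] \<in> D \<and> Pi ([x] @ [] @ []) = Pi ([x] @ [Pi []] @ [])"
      using pgD(8,9)[OF pg] by blast
    thus ?thesis using pgD(7)[OF pg xM] unfolding e_def by auto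
  qed
  have eD: "[e] \<in> D" using pgD(3)[OF pg eM] .
  note ee = xe[OF eD]
  have two: "F (w,a) = G (w,a)" if s: "pg_prod_simplex D m (w,a)" and l: "length w \<ge> 2"
    and t: "F (tl w, tl a) = G (tl w, tl a)" and b: "F (butlast w, butlast a) = G (butlast w, butlast a)" for w a
  proof -
    have lw: "0 < length w" using l by linarith
    have "length (F (w,a)) = length w" "length (G (w,a)) = length w"
      using s assms(3,4) unfolding simplicial_map_prod_def by blast+
    moreover have "tl (F (w,a)) = tl (G (w,a))"
      using t face_tl[OF assms(3) s lw] face_tl[OF assms(4) s lw] by simp
    moreover have "butlast (F (w,a)) = butlast (G (w,a))"
      using b face_bl[OF assms(3) s lw] face_bl[OF assms(4) s lw] by simp
    ultimately show ?thesis using l tlbl by metis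
  qed
  have rep: "F (w, replicate (Suc (length w)) i) = G (w, replicate (Suc (length w)) i)"
    if "i \<le> m" "w \<in> D" for i w using assms(5) that by blast
  have E: "b \<le> c \<longrightarrow> F ([e],[b,c]) = G ([e],[b,c])" if cm: "c \<le> m" for b c
    using cm
  proof (induction c)
    case 0
    then show ?case using rep[of 0 "[e]"] eD by (simp add: numeral_eq_Suc)
  next
    case (Suc c)
    show ?case
    proof
      assume bc: "b \<le> Suc c"
      show "F ([e], [b, Suc c]) = G ([e], [b, Suc c])"
      proof (cases "b = Suc c")
        case True
        then show ?thesis using rep[of b "[e]"] eD Suc.prems by (simp add: numeral_eq_Suc)
      next
        case False
        show ?thesis
        proof (cases "b = c")
          case True
          then show ?thesis using assms(6) Suc.prems unfolding e_def
            by (metis atLeastAtMost_iff diff_Suc_1 le_add1 plus_1_eq_Suc)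
        next
          case False
          hence bc': "b \<le> c" "b < c" using bc \<open>b \<noteq> Suc c\<close> by auto
          have s: "pg_prod_simplex D m ([e,e],[b,c,Suc c])"
            using ee Suc.prems bc' by (simp add: pg_prod_simplex_def delta_simplices_def)
          have IH: "F ([e],[b,c]) = G ([e],[b,c])" using Suc bc' by simp
          have T: "F ([e],[c,Suc c]) = G ([e],[c,Suc c])" using assms(6) Suc.prems unfolding e_def
            by (metis One_nat_def atLeastAtMost_iff diff_Suc_1 le_add1 plus_1_eq_Suc)
          have "F ([e,e],[b,c,Suc c]) = G ([e,e],[b,c,Suc c])"
            using two[OF s] IH T by simp
          thus ?thesis using face_1[OF assms(3) s] face_1[OF assms(4) s] ee by simp
        qed
      qed
    qed
  qed
  have E1: "F ([x],[b,c]) = G ([x],[b,c])" if s: "pg_prod_simplex D m ([x],[b,c])" for x b c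
  proof -
    have xD: "[x] \<in> D" and bc: "b \<le> c" "c \<le> m" using s by (auto simp: pg_prod_simplex_def delta_simplices_def)
    show ?thesis
    proof (cases "b = c")
      case True
      then show ?thesis using rep[of b "[x]"] xD bc by (simp add: numeral_eq_Suc)
    next
      case False
      have s2: "pg_prod_simplex D m ([x,e],[b,b,c])"
        using xe[OF xD] bc by (simp add: pg_prod_simplex_def delta_simplices_def)
      have "F ([x,e],[b,b,c]) = G ([x,e],[b,b,c])"
        using two[OF s2] E[OF bc(2)] bc rep[of b "[x]"] xD by (simp add: numeral_eq_Suc)
      thus ?thesis using face_1[OF assms(3) s2] face_1[OF assms(4) s2] xe[OF xD] by simp
    qed
  qed
  have main: "\<forall>w a. pg_prod_simplex D m (w,a) \<longrightarrow> length w = n \<longrightarrow> F (w,a) = G (w,a)" for n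
  proof (induction n rule: less_induct)
    case (less n)
    show ?case
    proof (intro allI impI)
      fix w a assume s: "pg_prod_simplex D m (w,a)" and ln: "length w = n"
      have la: "length a = Suc n" "sorted a" "set a \<subseteq> {..m}" "w \<in> D"
        using s ln by (auto simp: pg_prod_simplex_def delta_simplices_def)
      consider "n = 0" | "n = 1" | "n \<ge> 2" by linarith
      then show "F (w,a) = G (w,a)"
      proof cases
        case 1
        then obtain b where "a = [b]" using la by (metis length_0_conv length_Suc_conv)
        moreover have "b \<le> m" using la calculation by auto
        ultimately show ?thesis using rep[of b w] la ln 1 by simp
      next
        case 2
        then obtain b c where "a = [b,c]" using la
          by (metis One_nat_def length_0_conv length_Suc_conv)
        moreover obtain x where "w = [x]" using ln 2 by (metis One_nat_def length_0_conv length_Suc_conv)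
        ultimately show ?thesis using E1 s by simp
      next
        case 3
        have "F (tl w, tl a) = G (tl w, tl a)"
          using less.IH[of "n - 1"] prod_tl[OF pg s] 3 ln by simp
        moreover have "F (butlast w, butlast a) = G (butlast w, butlast a)"
          using less.IH[of "n - 1"] prod_bl[OF pg s] 3 ln by simp
        ultimately show ?thesis using two[OF s] 3 ln by simp
      qed
    qed
  qed
  show ?thesis using main by auto
qed

end
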